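(* Let $P_1,P_2,N>0$. If $\sigma_1^2\ge P_1\big(\frac32+\frac{P_2}{N}\big)$ and $\sigma_2^2\ge P_2\big(\frac32+\frac{P_1}{N}\big)$, then $\mathcal R_{\mathrm{Wil}}(P_1,P_2,N,\sigma_1^2,\sigma_2^2)=\mathcal C_{\mathrm{MAC}}(P_1,P_2,N)$.
   Context: For $x\in[0,1]$, $\bar x=1-x$. The region $\mathcal R_{\mathrm{Wil}}(P_1,P_2,N,\sigma_1^2,\sigma_2^2)$ (for $\sigma_1^2,\sigma_2^2\ge0$) is the set of pairs $(R_1,R_2)$ for which there exist nonnegative $R_{1,0},R_{1,1}$ with $R_{1,0}+R_{1,1}=R_1$, nonnegative $R_{2,0},R_{2,2}$ with $R_{2,0}+R_{2,2}=R_2$, and $\delta_1,\delta_2,\rho_1,\rho_2\in[0,1]$ such that $R_{1,1}\le\frac12\log(1+\frac{\delta_1P_1}{N})$; $R_{1,0}\le\frac12\log\big(1+\frac{\bar\delta_1P_1(1-\rho_1^2)}{\delta_1P_1+N+\sigma_2^2}\big)$; $R_{2,0}\le\frac12\log\big(1+\frac{\bar\delta_2P_2(1-\rho_2^2)}{\delta_2P_2+N+\sigma_1^2}\big)$; $R_{2,2}\le\frac12\log(1+\frac{\delta_2P_2}{N})$; $R_{1,1}+R_{2,2}\le\frac12\log(1+\frac{\delta_1P_1+\delta_2P_2}{N})$; $R_1+R_2\le\frac12\log\big(1+\frac{P_1+P_2+2\sqrt{\bar\delta_1\bar\delta_2P_1P_2}\rho_1\rho_2}{N}\big)$. The no-feedback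 capacity region $\mathcal C_{\mathrm{MAC}}(P_1,P_2,N)$ is the set of nonnegative $(R_1,R_2)$ with $R_1\le\frac12\log(1+\frac{P_1}{N})$, $R_2\le\frac12\log(1+\frac{P_2}{N})$, $R_1+R_2\le\frac12\log(1+\frac{P_1+P_2}{N})$. *)

theory Defs
  imports Complex_Main
begin

text \<open>Logarithms are taken base 2 (the base is immaterial for the set equality).
 The parameters s1, s2 stand for the variances sigma_1^2, sigma_2^2.\<close>

definition R_Wil :: "real \<Rightarrow> real \<Rightarrow> real \<Rightarrow> real \<Rightarrow> real \<Rightarrow> (real \<times> real) set" where
  "R_Wil P1 P2 N s1 s2 = {(R1, R2). \<exists>R10 R11 R20 R22 d1 d2 r1 r2.
     R10 \<ge> 0 \<and> R11 \<ge> 0 \<and> R10 + R11 = R1 \<and>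
     R20 \<ge> 0 \<and> R22 \<ge> 0 \<and> R20 + R22 = R2 \<and>
     d1 \<in> {0..1} \<and> d2 \<in> {0..1} \<and> r1 \<in> {0..1} \<and> r2 \<in> {0..1} \<and>
     R11 \<le> 1/2 * log 2 (1 + d1 * P1 / N) \<and>
     R10 \<le> 1/2 * log 2 (1 + (1 - d1) * P1 * (1 - r1^2) / (d1 * P1 + N + s2)) \<and>
     R20 \<le> 1/2 * log 2 (1 + (1 - d2) * P2 * (1 - r2^2) / (d2 * P2 + N + s1)) \<and>
     R22 \<le> 1/2 * log 2 (1 + d2 * P2 / N) \<and>
     R11 + R22 \<le> 1/2 * log 2 (1 + (d1 * P1 + d2 * P2) / N) \<and>
     R1 + R2 \<le> 1/2 * log 2 (1 + (P1 + P2 + 2 * sqrt ((1 - d1) * (1 - d2) * P1 * P2) * r1 * r2) / N)}"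

definition C_MAC :: "real \<Rightarrow> real \<Rightarrow> real \<Rightarrow> (real \<times> real) set" where
  "C_MAC P1 P2 N = {(R1, R2). R1 \<ge> 0 \<and> R2 \<ge> 0 \<and>
     R1 \<le> 1/2 * log 2 (1 + P1 / N) \<and> R2 \<le> 1/2 * log 2 (1 + P2 / N) \<and>
     R1 + R2 \<le> 1/2 * log 2 (1 + (P1 + P2) / N)}"

end

theory Submission
  imports Defs
begin

lemma key0:
  fixes a c e1 e2 N s1 s2 :: real
  assumes "a\<ge>0" "c\<ge>0" "e1\<ge>0" "e2\<ge>0" "N>0" "s1 \<ge> a+e1" "s2 \<ge> c+e2"
  shows "(N+a+c)*(N+a+s2+e1)*(N+c+s1+e2) \<le> (N+a+c+e1+e2)*(N+a+s2)*(N+c+s1)"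
proof -
  have h1: "e1*(N+c+s1)*(s2-c) \<ge> e1*(N+c+s1)*e2" using assms by (intro mult_left_mono) auto
  have h2: "e2*(N+a+s2)*(s1-a) \<ge> e2*(N+a+s2)*e1" using assms by (intro mult_left_mono) auto
  have h3: "e1*e2*(N+a+c) \<le> e1*e2*((N+c+s1)+(N+a+s2))" using assms by (intro mult_left_mono) auto
  show ?thesis using h1 h2 h3 by (simp add: algebra_simps)
qed

lemma key1:
  fixes a c e1 e2 u1 u2 N s1 s2 :: real
  assumes "a\<ge>0" "c\<ge>0" "e1\<ge>0" "e2\<ge>0" "N>0" "s1 \<ge> a+e1" "s2 \<ge> c+e2"
    "0 \<le> u1" "u1 \<le> e1" "0 \<le> u2" "u2 \<le> e2"
  shows "(1+(a+c)/N)*(1+u1/(a+N+s2))*(1+u2/(c+N+s1)) \<le> 1+(a+e1+c+e2)/N"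
proof -
  define X where "X = a+N+s2"
  define Y where "Y = c+N+s1"
  have X: "X > 0" unfolding X_def using assms by linarith
  have Y: "Y > 0" unfolding Y_def using assms by linarith
  have A0: "1+(a+c)/N \<ge> 0" using assms by simp
  have b1: "1+u1/X \<le> 1+e1/X" using X assms(9) by (simp add: divide_right_mono)
  have b2: "1+u2/Y \<le> 1+e2/Y" using Y assms(11) by (simp add: divide_right_mono)
  have b1p: "1+u1/X \<ge> 0" using X assms(8) by simp
  have b2p: "1+u2/Y \<ge> 0" using Y assms(10) by simp
  have b1q: "1+e1/X \<ge> 0" using X assms(3) by simp
  have "(1+(a+c)/N)*(1+u1/X)*(1+u2/Y) \<le> (1+(a+c)/N)*(1+e1/X)*(1+u2/Y)"
    by (rule mult_right_mono[OF mult_left_mono[OF b1 A0] b2p])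
  also have "\<dots> \<le> (1+(a+c)/N)*(1+e1/X)*(1+e2/Y)"
    by (rule mult_left_mono[OF b2 mult_nonneg_nonneg[OF A0 b1q]])
  also have "\<dots> = ((N+a+c)/N)*((X+e1)/X)*((Y+e2)/Y)"
  proof -
    have "1+(a+c)/N = (N+a+c)/N" using assms(5) by (simp add: field_simps)
    moreover have "1+e1/X = (X+e1)/X" using X by (simp add: field_simps)
    moreover have "1+e2/Y = (Y+e2)/Y" using Y by (simp add: field_simps)
    ultimately show ?thesis by simp
  qed
  also have "\<dots> = ((N+a+c)*(X+e1)*(Y+e2)) / (N*X*Y)" by simp
  also have "\<dots> \<le> ((N+a+c+e1+e2)*X*Y) / (N*X*Y)"
  proof (rule divide_right_mono)
    show "(N+a+c)*(X+e1)*(Y+e2) \<le> (N+a+c+e1+e2)*X*Y"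
      using key0[OF assms(1-7)] unfolding X_def Y_def by (simp add: add.assoc add.commute add.left_commute)
    show "0 \<le> N*X*Y" using X Y assms(5) by simp
  qed
  also have "\<dots> = (N+a+c+e1+e2)/N" using X Y by simp
  also have "\<dots> = 1+(a+e1+c+e2)/N" using assms(5) by (simp add: field_simps)
  finally show ?thesis unfolding X_def Y_def .
qed

lemma cancel_helper:
  fixes x y N :: real
  assumes "x > 0"
  shows "(x/N)*(y/x) = y/N"
  using assms by simp

lemma key2:
  fixes d P N u s :: real
  assumes "0\<le>d" "d\<le>1" "P>0" "N>0" "s\<ge>0" "0\<le>u" "u\<le>(1-d)*P"
  shows "(1+d*P/N)*(1+u/(d*P+N+s)) \<le> 1+P/N"
proof -
  have p0: "d*P \<ge> 0" using assms by simp
  have p: "d*P+N+s>0" "d*P \<ge> 0" using assms p0 by linarith+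
  have p2: "d*P+N>0" using assms p0 by linarith
  have "1+u/(d*P+N+s) \<le> 1+(1-d)*P/(d*P+N)"
  proof -
    have "u/(d*P+N+s) \<le> (1-d)*P/(d*P+N+s)" using p assms by (simp add: divide_right_mono)
    also have "\<dots> \<le> (1-d)*P/(d*P+N)" by (rule frac_le) (use p p2 assms in auto)
    finally show ?thesis by simp
  qed
  hence "(1+d*P/N)*(1+u/(d*P+N+s)) \<le> (1+d*P/N)*(1+(1-d)*P/(d*P+N))"
    using p assms by (intro mult_left_mono) auto
  also have "\<dots> = ((d*P+N)/N)*((N+P)/(d*P+N))"
  proof -
    have "1+(1-d)*P/(d*P+N) = (N+P)/(d*P+N)" using p2 by (simp add: field_simps)
    moreover have "1+d*P/N = (d*P+N)/N" using assms by (simp add: field_simps)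
    ultimately show ?thesis by simp
  qed
  also have "\<dots> = (N+P)/N" using p2 by (rule cancel_helper)
  also have "\<dots> = 1+P/N" using assms by (simp add: field_simps)
  finally show ?thesis .
qed

lemma logsum:
  fixes x y z :: real
  assumes "x>0" "y>0" "x*y \<le> z"
  shows "1/2*log 2 x + 1/2*log 2 y \<le> 1/2*log 2 z"
proof -
  have xy: "x*y>0" using assms by simp
  have zp: "z>0" using xy assms by linarith
  have "log 2 x + log 2 y = log 2 (x*y)" using assms by (simp add: log_mult)
  also have "\<dots> \<le> log 2 z" using assms by (subst log_le_cancel_iff) (use xy zp in auto)
  finally show ?thesis by simp
qed


lemma cm:
  fixes R1 R2 P1 P2 N s1 s2 :: real
  assumes h: "R1 \<ge> 0" "R2 \<ge> 0"
     "R1 \<le> 1/2 * log 2 (1 + P1 / N)" "R2 \<le> 1/2 * log 2 (1 + P2 / N)"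
     "R1 + R2 \<le> 1/2 * log 2 (1 + (P1 + P2) / N)"
  shows "(R1,R2) \<in> R_Wil P1 P2 N s1 s2"
  unfolding R_Wil_def mem_Collect_eq case_prod_conv
  apply (rule exI[of _ 0], rule exI[of _ R1], rule exI[of _ 0], rule exI[of _ R2])
  apply (rule exI[of _ 1], rule exI[of _ 1], rule exI[of _ 0], rule exI[of _ 0])
  using h by simp

theorem mainTheorem14:
  fixes P1 P2 N s1 s2 :: real
  assumes "P1 > 0" and "P2 > 0" and "N > 0"
    and "s1 \<ge> P1 * (3/2 + P2 / N)"
    and "s2 \<ge> P2 * (3/2 + P1 / N)"
  shows "R_Wil P1 P2 N s1 s2 = C_MAC P1 P2 N"
proof
  have s1b: "s1 \<ge> P1"
  proof -
    have "P2/N \<ge> 0" using assms by simp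
    have "P1 * (3/2 + P2/N) \<ge> P1 * 1" by (rule mult_left_mono) (use assms \<open>P2/N \<ge> 0\<close> in linarith)+
    thus ?thesis using assms by linarith
  qed
  have s2b: "s2 \<ge> P2"
  proof -
    have "P1/N \<ge> 0" using assms by simp
    have "P2 * (3/2 + P1/N) \<ge> P2 * 1" by (rule mult_left_mono) (use assms \<open>P1/N \<ge> 0\<close> in linarith)+
    thus ?thesis using assms by linarith
  qed
  show "R_Wil P1 P2 N s1 s2 \<subseteq> C_MAC P1 P2 N"
  proof
    fix x assume xin: "x \<in> R_Wil P1 P2 N s1 s2"
    obtain R1 R2 where x: "x = (R1,R2)" by (cases x)
    have "\<exists>R10 R11 R20 R22 d1 d2 r1 r2.
     R10 \<ge> 0 \<and> R11 \<ge> 0 \<and> R10 + R11 = R1 \<and>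
     R20 \<ge> 0 \<and> R22 \<ge> 0 \<and> R20 + R22 = R2 \<and>
     d1 \<in> {0..1} \<and> d2 \<in> {0..1} \<and> r1 \<in> {0..1} \<and> r2 \<in> {0..1} \<and>
     R11 \<le> 1/2 * log 2 (1 + d1 * P1 / N) \<and>
     R10 \<le> 1/2 * log 2 (1 + (1 - d1) * P1 * (1 - r1^2) / (d1 * P1 + N + s2)) \<and>
     R20 \<le> 1/2 * log 2 (1 + (1 - d2) * P2 * (1 - r2^2) / (d2 * P2 + N + s1)) \<and>
     R22 \<le> 1/2 * log 2 (1 + d2 * P2 / N) \<and>
     R11 + R22 \<le> 1/2 * log 2 (1 + (d1 * P1 + d2 * P2) / N) \<and>
     R1 + R2 \<le> 1/2 * log 2 (1 + (P1 + P2 + 2 * sqrt ((1 - d1) * (1 - d2) * P1 * P2) * r1 * r2) / N)"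
      using xin unfolding R_Wil_def x by (simp only: mem_Collect_eq case_prod_conv)
    then obtain R10 R11 R20 R22 d1 d2 r1 r2 where
      h: "R10 \<ge> 0" "R11 \<ge> 0" "R10 + R11 = R1"
     "R20 \<ge> 0" "R22 \<ge> 0" "R20 + R22 = R2"
     "d1 \<in> {0..1}" "d2 \<in> {0..1}" "r1 \<in> {0..1}" "r2 \<in> {0..1}"
     "R11 \<le> 1/2 * log 2 (1 + d1 * P1 / N)"
     "R10 \<le> 1/2 * log 2 (1 + (1 - d1) * P1 * (1 - r1^2) / (d1 * P1 + N + s2))"
     "R20 \<le> 1/2 * log 2 (1 + (1 - d2) * P2 * (1 - r2^2) / (d2 * P2 + N + s1))"
     "R22 \<le> 1/2 * log 2 (1 + d2 * P2 / N)"
     "R11 + R22 \<le> 1/2 * log 2 (1 + (d1 * P1 + d2 * P2) / N)"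
      by (elim exE conjE) (rule that; assumption)
    define u1 where "u1 = (1 - d1) * P1 * (1 - r1^2)"
    define u2 where "u2 = (1 - d2) * P2 * (1 - r2^2)"
    have d: "0 \<le> d1" "d1 \<le> 1" "0 \<le> d2" "d2 \<le> 1" "0 \<le> r1" "r1 \<le> 1" "0 \<le> r2" "r2 \<le> 1"
      using h(7-10) by auto
    have r1s: "0 \<le> 1 - r1^2" "1 - r1^2 \<le> 1" using d by (auto simp: power_le_one)
    have r2s: "0 \<le> 1 - r2^2" "1 - r2^2 \<le> 1" using d by (auto simp: power_le_one)
    have e1: "0 \<le> (1-d1)*P1" "0 \<le> d1*P1" using d assms by auto
    have e2: "0 \<le> (1-d2)*P2" "0 \<le> d2*P2" using d assms by auto
    have u1: "0 \<le> u1" "u1 \<le> (1-d1)*P1" unfolding u1_def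
      using e1 r1s mult_left_mono[OF r1s(2) e1(1)] by auto
    have u2: "0 \<le> u2" "u2 \<le> (1-d2)*P2" unfolding u2_def
      using e2 r2s mult_left_mono[OF r2s(2) e2(1)] by auto
    have pos1: "d1*P1+N+s2 > 0" "d2*P2+N+s1 > 0" using e1 e2 s1b s2b assms by linarith+
    have q11: "1 + d1 * P1 / N > 0" "1 + d2 * P2 / N > 0" "1 + (d1 * P1 + d2 * P2) / N > 0"
      using e1 e2 assms by (auto intro: add_pos_nonneg)
    have q10: "1 + u1 / (d1 * P1 + N + s2) > 0" "1 + u2 / (d2 * P2 + N + s1) > 0"
      using u1 u2 pos1 by (auto intro: add_pos_nonneg)
    have s1nn: "s1 \<ge> 0" "s2 \<ge> 0" using s1b s2b assms by linarith+
    note s2nn = s1nn(2)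
    have R10: "R10 \<le> 1/2 * log 2 (1 + u1 / (d1 * P1 + N + s2))" using h(12) unfolding u1_def .
    have R20: "R20 \<le> 1/2 * log 2 (1 + u2 / (d2 * P2 + N + s1))" using h(13) unfolding u2_def .
    have A: "R1 \<le> 1/2 * log 2 (1 + P1/N)"
    proof -
      have "1/2 * log 2 (1 + d1 * P1 / N) + 1/2 * log 2 (1 + u1 / (d1 * P1 + N + s2)) \<le> 1/2 * log 2 (1 + P1/N)"
        by (rule logsum[OF q11(1) q10(1) key2[OF d(1,2) assms(1,3) s2nn u1]])
      thus ?thesis using h(3,11) R10 by linarith
    qed
    have B: "R2 \<le> 1/2 * log 2 (1 + P2/N)"
    proof -
      have "1/2 * log 2 (1 + d2 * P2 / N) + 1/2 * log 2 (1 + u2 / (d2 * P2 + N + s1)) \<le> 1/2 * log 2 (1 + P2/N)"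
        by (rule logsum[OF q11(2) q10(2) key2[OF d(3,4) assms(2,3) s1nn(1) u2]])
      thus ?thesis using h(6,14) R20 by linarith
    qed
    have C: "R1 + R2 \<le> 1/2 * log 2 (1 + (P1+P2)/N)"
    proof -
      have k2: "d1*P1+(1-d1)*P1+d2*P2+(1-d2)*P2 = P1+P2" by (simp add: algebra_simps)
      have a1: "d1*P1+(1-d1)*P1 = P1" "d2*P2+(1-d2)*P2 = P2" by (simp_all add: algebra_simps)
      have k0: "(1+(d1*P1+d2*P2)/N)*(1+u1/(d1*P1+N+s2))*(1+u2/(d2*P2+N+s1)) \<le> 1+(d1*P1+(1-d1)*P1+d2*P2+(1-d2)*P2)/N"
        by (rule key1) (use e1 e2 u1 u2 assms s1b s2b a1 in linarith)+
      have k: "(1+(d1*P1+d2*P2)/N)*(1+u1/(d1*P1+N+s2))*(1+u2/(d2*P2+N+s1)) \<le> 1+(P1+P2)/N"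
        using k0 unfolding k2 .
      have l1: "1/2 * log 2 (1 + (d1 * P1 + d2 * P2) / N) + 1/2 * log 2 (1 + u1 / (d1 * P1 + N + s2))
         = 1/2 * log 2 ((1 + (d1 * P1 + d2 * P2) / N) * (1 + u1 / (d1 * P1 + N + s2)))"
        using q11 q10 by (simp add: log_mult)
      have "1/2 * log 2 ((1 + (d1 * P1 + d2 * P2) / N) * (1 + u1 / (d1 * P1 + N + s2))) + 1/2 * log 2 (1 + u2 / (d2 * P2 + N + s1)) \<le> 1/2 * log 2 (1 + (P1+P2)/N)"
        by (rule logsum[OF mult_pos_pos[OF q11(3) q10(1)] q10(2) k])
      thus ?thesis using h(3,6,15) R10 R20 l1 by linarith
    qed
    show "x \<in> C_MAC P1 P2 N" unfolding C_MAC_def x using A B C h(1-6) by auto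
  qed
  show "C_MAC P1 P2 N \<subseteq> R_Wil P1 P2 N s1 s2"
  proof
    fix x assume "x \<in> C_MAC P1 P2 N"
    then obtain R1 R2 where x: "x = (R1,R2)" and h: "R1 \<ge> 0" "R2 \<ge> 0"
     "R1 \<le> 1/2 * log 2 (1 + P1 / N)" "R2 \<le> 1/2 * log 2 (1 + P2 / N)"
     "R1 + R2 \<le> 1/2 * log 2 (1 + (P1 + P2) / N)" unfolding C_MAC_def by auto
    show "x \<in> R_Wil P1 P2 N s1 s2" unfolding x by (rule cm[OF h])
  qed
qed

end
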